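(* Let $U\in\mathcal U_n$ and let $U'\in\mathcal U_{n+1}$ be obtained from $U$ by adding an $(n+1)$-st unit interval $I_{n+1}$ to the right of the intervals of $U$. Let $s$ be the number of elements $i\in\{1,\dots,n\}$ that are incomparable to $n+1$ in $U'$. Then $a(U')$ is obtained from $a(U)$ by adding a final peak in position $(n-s,n+1)$.
   Context: A unit interval order on $\{1,\dots,n\}$ is given by closed intervals $I_1,\dots,I_n$ of length $1$, numbered from left to right, with $i\prec j$ iff $I_i$ lies strictly to the left of $I_j$; $\mathcal U_n$ is the set of these; adding $I_{n+1}$ to the right means $I_1,\dots,I_{n+1}$ remain numbered from left to right. A Dyck path of length $n$ is a lattice path from $(0,0)$ to $(n,n)$ with unit up and right steps never going below $y=x$. For $1\le i<j\le n$, box $(i,j)$ is the square $[i-1,i]\times[j-1,j]$; the area set of a Dyck path is the set of boxes between it and the diagonal. $a(U)$ is the Dyck path whose area set is $\{(i,j):1\le i<j\le n,\ i\not\prec j\}$. Adding a final peak in position $(i,n+1)$ to a Dyck path $D$ of length $n$ means: $D$ passes through $(i,n)$, and the new path of length $n+1$ follows $D$ up to $(i,n)$, then takes an up step to $(i,n+1)$, then right steps to $(n+1,n+1)$. *)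

theory Defs
  imports Complex_Main
begin

text \<open>Unit interval orders: the interval I_i is [x i, x i + 1]; the intervals are
numbered from left to right, i.e. x is nondecreasing on the index range.\<close>

definition left_to_right :: "nat \<Rightarrow> (nat \<Rightarrow> real) \<Rightarrow> bool" where
  "left_to_right n x \<longleftrightarrow> (\<forall>i j. 1 \<le> i \<and> i \<le> j \<and> j \<le> n \<longrightarrow> x i \<le> x j)"

definition prec :: "(nat \<Rightarrow> real) \<Rightarrow> nat \<Rightarrow> nat \<Rightarrow> bool" where
  "prec x i j \<longleftrightarrow> x i + 1 < x j"

definition incomparable :: "(nat \<Rightarrow> real) \<Rightarrow> nat \<Rightarrow> nat \<Rightarrow> bool" where
  "incomparable x i j \<longleftrightarrow> \<not> prec x i j \<and> \<not> prec x j i"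

text \<open>Lattice paths: N = unit up step, E = unit right step.\<close>
datatype step = N | E

definition ups :: "step list \<Rightarrow> nat" where
  "ups D = length (filter (\<lambda>s. s = N) D)"

definition rights :: "step list \<Rightarrow> nat" where
  "rights D = length (filter (\<lambda>s. s = E) D)"

definition dyck :: "nat \<Rightarrow> step list \<Rightarrow> bool" where
  "dyck n D \<longleftrightarrow> ups D = n \<and> rights D = n \<and>
     (\<forall>k \<le> length D. rights (take k D) \<le> ups (take k D))"

definition passes_through :: "step list \<Rightarrow> nat \<Rightarrow> nat \<Rightarrow> bool" where
  "passes_through D p q \<longleftrightarrow> (\<exists>k \<le> length D. rights (take k D) = p \<and> ups (take k D) = q)"

text \<open>Height of the i-th right step (1-based): the y-coordinate at which the path
traverses the column [i-1,i].\<close>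
definition col_height :: "step list \<Rightarrow> nat \<Rightarrow> nat" where
  "col_height D i = ups (take (LEAST k. rights (take k D) = i) D)"

text \<open>Area set: boxes (i,j) = [i-1,i] x [j-1,j], 1 \<le> i < j \<le> n, lying between the
path and the diagonal.\<close>
definition area :: "nat \<Rightarrow> step list \<Rightarrow> (nat \<times> nat) set" where
  "area n D = {(i,j). 1 \<le> i \<and> i < j \<and> j \<le> n \<and> j \<le> col_height D i}"

definition a_path :: "nat \<Rightarrow> (nat \<Rightarrow> real) \<Rightarrow> step list" where
  "a_path n x = (THE D. dyck n D \<and>
     area n D = {(i,j). 1 \<le> i \<and> i < j \<and> j \<le> n \<and> \<not> prec x i j})"

text \<open>Adding a final peak in position (i, n+1) to a path D of length n (which passes
through (i,n)): follow D up to (i,n), go up to (i,n+1), then right to (n+1,n+1).\<close>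
definition add_final_peak :: "nat \<Rightarrow> step list \<Rightarrow> nat \<Rightarrow> step list" where
  "add_final_peak n D i = take (i + n) D @ [N] @ replicate (n + 1 - i) E"

end

theory Submission
  imports Defs
begin

lemma rights_simps[simp]: "rights [] = 0" "rights (E # D) = Suc (rights D)" "rights (N # D) = rights D"
  "rights (D @ D') = rights D + rights D'" "rights (replicate k N) = 0" "rights (replicate k E) = k"
  by (auto simp: rights_def filter_replicate)
lemma ups_simps[simp]: "ups [] = 0" "ups (E # D) = ups D" "ups (N # D) = Suc (ups D)"
  "ups (D @ D') = ups D + ups D'" "ups (replicate k N) = k" "ups (replicate k E) = 0"
  by (auto simp: ups_def filter_replicate)

lemma ups_take_le: "ups (take k D) \<le> ups D"
  by (metis append_take_drop_id le_add1 ups_simps(4))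
lemma rights_take_le: "rights (take k D) \<le> rights D"
  by (metis append_take_drop_id le_add1 rights_simps(4))

lemma exists_prefix: "i \<le> rights D \<Longrightarrow> \<exists>k \<le> length D. rights (take k D) = i"
proof (induction D arbitrary: i)
  case Nil then show ?case by auto
next
  case (Cons a D)
  show ?case
  proof (cases "i = 0")
    case True then show ?thesis by (intro exI[of _ 0]) auto
  next
    case False
    show ?thesis
    proof (cases a)
      case N
      with Cons obtain k where "k \<le> length D" "rights (take k D) = i" by auto
      with N show ?thesis by (intro exI[of _ "Suc k"]) auto
    next
      case E
      have "i - 1 \<le> rights D" using Cons.prems E by simp
      with Cons.IH obtain k where "k \<le> length D" "rights (take k D) = i - 1" by blast
      with E False show ?thesis by (intro exI[of _ "Suc k"]) auto
    qed
  qed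
qed

lemma col_height_snoc:
  assumes "i \<le> rights D"
  shows "col_height (D @ [s]) i = col_height D i"
proof -
  obtain k1 where k1: "k1 \<le> length D" "rights (take k1 D) = i" using exists_prefix[OF assms] by blast
  define k0 where "k0 = (LEAST k. rights (take k D) = i)"
  have P0: "rights (take k0 D) = i" unfolding k0_def by (rule LeastI[of _ k1]) (rule k1(2))
  have "k0 \<le> k1" unfolding k0_def by (rule Least_le) (rule k1(2))
  hence k0l: "k0 \<le> length D" using k1 by simp
  have "(LEAST k. rights (take k (D @ [s])) = i) = k0"
  proof (rule Least_equality)
    show "rights (take k0 (D @ [s])) = i" using P0 k0l by simp
  next
    fix y assume y: "rights (take y (D @ [s])) = i"
    show "k0 \<le> y"
    proof (rule ccontr)
      assume "\<not> k0 \<le> y"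
      hence "y < k0" by simp
      hence "take y (D @ [s]) = take y D" using k0l by simp
      hence "rights (take y D) = i" using y by simp
      hence "k0 \<le> y" unfolding k0_def by (rule Least_le)
      with \<open>y < k0\<close> show False by simp
    qed
  qed
  thus ?thesis unfolding col_height_def using k0l k0_def by simp
qed

lemma col_height_snocE: "col_height (D @ [E]) (Suc (rights D)) = ups D"
proof -
  have "(LEAST k. rights (take k (D @ [E])) = Suc (rights D)) = Suc (length D)"
  proof (rule Least_equality)
    show "rights (take (Suc (length D)) (D @ [E])) = Suc (rights D)" by simp
  next
    fix y assume y: "rights (take y (D @ [E])) = Suc (rights D)"
    show "Suc (length D) \<le> y"
    proof (rule ccontr)
      assume "\<not> ?thesis"
      hence "take y (D @ [E]) = take y D" by simp
      with y rights_take_le[of y D] show False by simp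
    qed
  qed
  thus ?thesis unfolding col_height_def by simp
qed

lemma col_height_appN: "i \<le> rights D \<Longrightarrow> col_height (D @ replicate k N) i = col_height D i"
proof (induction k)
  case 0 then show ?case by simp
next
  case (Suc k)
  have "col_height (D @ replicate (Suc k) N) i = col_height ((D @ replicate k N) @ [N]) i"
    by (simp add: replicate_append_same[symmetric])
  also have "\<dots> = col_height (D @ replicate k N) i" using Suc.prems by (intro col_height_snoc) simp
  finally show ?case using Suc by simp
qed

lemma col_height_0[simp]: "col_height D 0 = 0"
proof -
  have "(LEAST k. rights (take k D) = 0) = 0" by (rule Least_equality) auto
  thus ?thesis unfolding col_height_def by simp
qed

lemma col_height_le: "i \<le> rights D \<Longrightarrow> col_height D i \<le> ups D"
  unfolding col_height_def by (rule ups_take_le)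

lemma dyck_col_height_ge:
  assumes "dyck n D" "i \<le> n"
  shows "i \<le> col_height D i"
proof -
  obtain k1 where k1: "k1 \<le> length D" "rights (take k1 D) = i"
    using exists_prefix[of i D] assms by (auto simp: dyck_def)
  define k0 where "k0 = (LEAST k. rights (take k D) = i)"
  have P0: "rights (take k0 D) = i" unfolding k0_def by (rule LeastI[of _ k1]) (rule k1(2))
  have "k0 \<le> k1" unfolding k0_def by (rule Least_le) (rule k1(2))
  hence k0l: "k0 \<le> length D" using k1 by simp
  thus ?thesis using assms P0 unfolding col_height_def dyck_def k0_def[symmetric] by metis
qed

fun build :: "(nat \<Rightarrow> nat) \<Rightarrow> nat \<Rightarrow> step list" where
  "build h 0 = []"
| "build h (Suc m) = build h m @ replicate (h (Suc m) - h m) N @ [E]"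

lemma build_cong: "(\<And>i. i \<le> m \<Longrightarrow> h i = g i) \<Longrightarrow> build h m = build g m"
  by (induction m) auto

lemma decomp: "D = build (col_height D) (rights D) @ replicate (ups D - col_height D (rights D)) N"
proof (induction D rule: rev_induct)
  case Nil then show ?case by simp
next
  case (snoc a D)
  have cg: "build (col_height (D @ [a])) (rights D) = build (col_height D) (rights D)"
    by (rule build_cong) (simp add: col_height_snoc)
  have le: "col_height D (rights D) \<le> ups D" by (rule col_height_le) simp
  show ?case
  proof (cases a)
    case N
    have "col_height (D @ [a]) (rights D) = col_height D (rights D)" by (simp add: col_height_snoc)
    then show ?thesis using N cg le snoc.IH
      by (simp add: Suc_diff_le replicate_append_same[symmetric])
  next
    case E
    have c1: "col_height (D @ [a]) (Suc (rights D)) = ups D" using E col_height_snocE by simp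
    have c2: "col_height (D @ [a]) (rights D) = col_height D (rights D)" by (simp add: col_height_snoc)
    show ?thesis using E cg c1 c2 snoc.IH by simp
  qed
qed

lemma dyck_unique:
  assumes "dyck n D1" "dyck n D2" "area n D1 = area n D2"
  shows "D1 = D2"
proof -
  have eq: "col_height D1 i = col_height D2 i" if "i \<le> n" for i
  proof (cases "i = 0")
    case True then show ?thesis by simp
  next
    case False
    have a1: "i \<le> col_height D1 i" "col_height D1 i \<le> n"
      using dyck_col_height_ge[OF assms(1) that] col_height_le[of i D1] assms(1) that
      by (auto simp: dyck_def)
    have a2: "i \<le> col_height D2 i" "col_height D2 i \<le> n"
      using dyck_col_height_ge[OF assms(2) that] col_height_le[of i D2] assms(2) that
      by (auto simp: dyck_def)
    show ?thesis
    proof (rule ccontr)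
      assume ne: "col_height D1 i \<noteq> col_height D2 i"
      show False
      proof (cases "col_height D1 i < col_height D2 i")
        case True
        hence "(i, col_height D2 i) \<in> area n D2" using a1 a2 False unfolding area_def by auto
        hence "(i, col_height D2 i) \<in> area n D1" using assms(3) by simp
        thus False using True unfolding area_def by auto
      next
        case False2: False
        hence lt: "col_height D2 i < col_height D1 i" using ne by simp
        hence "(i, col_height D1 i) \<in> area n D1" using a1 a2 False unfolding area_def by auto
        hence "(i, col_height D1 i) \<in> area n D2" using assms(3) by simp
        thus False using lt unfolding area_def by auto
      qed
    qed
  qed
  have r: "rights D1 = n" "rights D2 = n" "ups D1 = n" "ups D2 = n" using assms by (auto simp: dyck_def)
  have "D1 = build (col_height D1) n @ replicate (n - col_height D1 n) N"
    using decomp[of D1] r by simp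
  also have "\<dots> = build (col_height D2) n @ replicate (n - col_height D2 n) N"
    using eq build_cong[of n "col_height D1" "col_height D2"] by simp
  also have "\<dots> = D2" using decomp[of D2] r by simp
  finally show ?thesis .
qed


lemma build_basic:
  assumes "h 0 = 0" "\<And>i. i < m \<Longrightarrow> h i \<le> h (Suc i)"
  shows "rights (build h m) = m \<and> ups (build h m) = h m \<and> length (build h m) = m + h m"
  using assms
proof (induction m)
  case 0 then show ?case by simp
next
  case (Suc m)
  have "h m \<le> h (Suc m)" using Suc.prems by simp
  with Suc show ?case by auto
qed

lemma build_col_height:
  assumes "h 0 = 0" "\<And>i. i < m \<Longrightarrow> h i \<le> h (Suc i)" "i \<le> m"
  shows "col_height (build h m) i = h i"
  using assms
proof (induction m arbitrary: i)
  case 0 then show ?case by simp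
next
  case (Suc m)
  have b: "rights (build h m) = m \<and> ups (build h m) = h m" using build_basic[of h m] Suc.prems by auto
  have hm: "h m \<le> h (Suc m)" using Suc.prems by simp
  have eq: "build h (Suc m) = (build h m @ replicate (h (Suc m) - h m) N) @ [E]" by simp
  show ?case
  proof (cases "i \<le> m")
    case True
    have "col_height (build h (Suc m)) i = col_height (build h m @ replicate (h (Suc m) - h m) N) i"
      unfolding eq using True b by (intro col_height_snoc) simp
    also have "\<dots> = col_height (build h m) i" using True b by (intro col_height_appN) simp
    finally show ?thesis using Suc True by simp
  next
    case False
    hence "i = Suc m" using Suc.prems by simp
    moreover have "col_height (build h (Suc m)) (Suc m) = h (Suc m)"
      unfolding eq using col_height_snocE[of "build h m @ replicate (h (Suc m) - h m) N"] b hm by simp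
    ultimately show ?thesis by simp
  qed
qed

lemma build_prefix:
  assumes "h 0 = 0" "\<And>i. i < m \<Longrightarrow> h i \<le> h (Suc i)" "\<And>i. i \<le> m \<Longrightarrow> i \<le> h i"
  shows "\<forall>k \<le> length (build h m). rights (take k (build h m)) \<le> ups (take k (build h m))"
  using assms
proof (induction m)
  case 0 then show ?case by simp
next
  case (Suc m)
  have b: "rights (build h m) = m \<and> ups (build h m) = h m \<and> length (build h m) = m + h m"
    using build_basic[of h m] Suc.prems by auto
  have hm: "h m \<le> h (Suc m)" "m \<le> h m" "Suc m \<le> h (Suc m)" using Suc.prems by auto
  have IH: "\<forall>k \<le> length (build h m). rights (take k (build h m)) \<le> ups (take k (build h m))"
    using Suc by auto
  show ?case
  proof (intro allI impI)
    fix k assume k: "k \<le> length (build h (Suc m))"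
    define B where "B = build h m"
    define d where "d = h (Suc m) - h m"
    have eq: "build h (Suc m) = B @ (replicate d N @ [E])" unfolding B_def d_def by simp
    show "rights (take k (build h (Suc m))) \<le> ups (take k (build h (Suc m)))"
    proof (cases "k \<le> length B")
      case True
      then show ?thesis unfolding eq using IH B_def by simp
    next
      case False
      define j where "j = k - length B"
      have tk: "take k (build h (Suc m)) = B @ take j (replicate d N @ [E])"
        unfolding eq j_def using False by simp
      have jl: "j \<le> Suc d" using k unfolding eq j_def by simp
      show ?thesis
      proof (cases "j \<le> d")
        case True
        hence "take j (replicate d N @ [E]) = replicate j N" by simp
        then show ?thesis unfolding tk using b hm B_def by simp
      next
        case False
        hence "j = Suc d" using jl by simp
        hence "take j (replicate d N @ [E]) = replicate d N @ [E]" by simp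
        then show ?thesis unfolding tk using b hm B_def d_def by simp
      qed
    qed
  qed
qed

lemma build_const:
  assumes "\<And>j. 1 \<le> j \<Longrightarrow> j \<le> Suc k \<Longrightarrow> h (m + j) = c"
  shows "build h (m + Suc k) = build h m @ replicate (c - h m) N @ replicate (Suc k) E"
  using assms
proof (induction k)
  case 0
  then show ?case using assms[of 1] by simp
next
  case (Suc k)
  have "build h (m + Suc (Suc k)) = build h (m + Suc k) @ replicate (h (m + Suc (Suc k)) - h (m + Suc k)) N @ [E]"
    by simp
  also have "h (m + Suc (Suc k)) = c" using Suc.prems[of "Suc (Suc k)"] by simp
  also have "h (m + Suc k) = c" using Suc.prems[of "Suc k"] by simp
  finally show ?case using Suc by (simp add: replicate_append_same[symmetric])
qed


definition H :: "nat \<Rightarrow> (nat \<Rightarrow> real) \<Rightarrow> nat \<Rightarrow> nat" where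
  "H n x i = (if i = 0 then 0 else Max {j \<in> {i..n}. x j \<le> x i + 1})"

lemma H_basic:
  assumes "1 \<le> i" "i \<le> n"
  shows "H n x i \<in> {j \<in> {i..n}. x j \<le> x i + 1}" "\<And>j. j \<in> {j \<in> {i..n}. x j \<le> x i + 1} \<Longrightarrow> j \<le> H n x i"
proof -
  have f: "finite {j \<in> {i..n}. x j \<le> x i + 1}" by simp
  have ne: "i \<in> {j \<in> {i..n}. x j \<le> x i + 1}" using assms by simp
  show "H n x i \<in> {j \<in> {i..n}. x j \<le> x i + 1}" proof -
    have "Max {j \<in> {i..n}. x j \<le> x i + 1} \<in> {j \<in> {i..n}. x j \<le> x i + 1}"
      using Max_in[OF f] ne by blast
    thus ?thesis unfolding H_def using assms by simp
  qed
  show "\<And>j. j \<in> {j \<in> {i..n}. x j \<le> x i + 1} \<Longrightarrow> j \<le> H n x i"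
    unfolding H_def using assms Max_ge[OF f] by auto
qed

lemma H_mono:
  assumes lr: "left_to_right n x" and "i \<le> i'" "i' \<le> n"
  shows "H n x i \<le> H n x i'"
proof (cases "i = 0")
  case True then show ?thesis by (simp add: H_def)
next
  case False
  have hi: "H n x i \<in> {j \<in> {i..n}. x j \<le> x i + 1}" using H_basic(1)[of i n x] False assms by simp
  have "x i \<le> x i'" using lr assms False unfolding left_to_right_def by simp
  show ?thesis
  proof (cases "H n x i < i'")
    case True
    then show ?thesis using H_basic(1)[of i' n x] False assms by auto
  next
    case F2: False
    hence "H n x i \<in> {j \<in> {i'..n}. x j \<le> x i' + 1}" using hi \<open>x i \<le> x i'\<close> by auto
    then show ?thesis using H_basic(2)[of i' n _ x] False assms by auto
  qed
qed

lemma H_prec: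
  assumes lr: "left_to_right n x" and "1 \<le> i" "i < j" "j \<le> n"
  shows "\<not> prec x i j \<longleftrightarrow> j \<le> H n x i"
proof
  assume "\<not> prec x i j"
  thus "j \<le> H n x i" using H_basic(2)[of i n j x] assms by (auto simp: prec_def)
next
  assume a: "j \<le> H n x i"
  have hi: "H n x i \<in> {j \<in> {i..n}. x j \<le> x i + 1}" using H_basic(1)[of i n x] assms by simp
  have "x j \<le> x (H n x i)" using lr a hi assms unfolding left_to_right_def by auto
  thus "\<not> prec x i j" using hi by (auto simp: prec_def)
qed

lemma a_path_eq:
  assumes lr: "left_to_right n x"
  shows "a_path n x = build (H n x) n"
proof -
  let ?h = "H n x"
  have h0: "?h 0 = 0" by (simp add: H_def)
  have mono: "\<And>i. i < n \<Longrightarrow> ?h i \<le> ?h (Suc i)" using H_mono[OF lr] by simp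
  have ge: "\<And>i. i \<le> n \<Longrightarrow> i \<le> ?h i"
    using H_basic(1) by (metis (no_types, lifting) atLeastAtMost_iff bot_nat_0.extremum leI less_one mem_Collect_eq)
  have le: "\<And>i. 1 \<le> i \<Longrightarrow> i \<le> n \<Longrightarrow> ?h i \<le> n" using H_basic(1) by auto
  have hn: "?h n = n"
  proof (cases "n = 0")
    case True then show ?thesis using h0 by simp
  next
    case False then show ?thesis using le[of n] ge[of n] by simp
  qed
  have bb: "rights (build ?h n) = n \<and> ups (build ?h n) = n"
    using build_basic[of ?h n, OF h0 mono] hn by simp
  have dy: "dyck n (build ?h n)"
    unfolding dyck_def using bb build_prefix[of ?h n, OF h0 mono ge] by simp
  have ar: "area n (build ?h n) = {(i,j). 1 \<le> i \<and> i < j \<and> j \<le> n \<and> \<not> prec x i j}"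
    unfolding area_def using build_col_height[of ?h n, OF h0 mono] H_prec[OF lr] by fastforce
  show ?thesis unfolding a_path_def
  proof (rule the_equality)
    show "dyck n (build ?h n) \<and> area n (build ?h n) = {(i,j). 1 \<le> i \<and> i < j \<and> j \<le> n \<and> \<not> prec x i j}"
      using dy ar by simp
  next
    fix D assume "dyck n D \<and> area n D = {(i,j). 1 \<le> i \<and> i < j \<and> j \<le> n \<and> \<not> prec x i j}"
    thus "D = build ?h n" using dyck_unique[of n D "build ?h n"] dy ar by simp
  qed
qed


theorem mainTheorem9:
  fixes n :: nat and x :: "nat \<Rightarrow> real"
  assumes "left_to_right (n + 1) x"
  defines "s \<equiv> card {i \<in> {1..n}. incomparable x i (n + 1)}"
  shows "passes_through (a_path n x) (n - s) n \<and>
         a_path (n + 1) x = add_final_peak n (a_path n x) (n - s)"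
proof -
  note lr1 = assms(1)
  have lr: "left_to_right n x" using lr1 unfolding left_to_right_def by auto
  have xle: "\<And>i. 1 \<le> i \<Longrightarrow> i \<le> n + 1 \<Longrightarrow> x i \<le> x (n + 1)"
    using lr1 unfolding left_to_right_def by auto
  define S where "S = {i \<in> {1..n}. x (n + 1) \<le> x i + 1}"
  have SS: "{i \<in> {1..n}. incomparable x i (n + 1)} = S"
    unfolding S_def
  proof (rule Collect_cong)
    fix i
    show "(i \<in> {1..n} \<and> incomparable x i (n + 1)) = (i \<in> {1..n} \<and> x (n + 1) \<le> x i + 1)"
    proof (cases "i \<in> {1..n}")
      case True
      hence "x i \<le> x (n + 1)" using xle[of i] by simp
      then show ?thesis unfolding incomparable_def prec_def by auto
    qed auto
  qed
  have sS: "s = card S" unfolding s_def SS ..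
  have "\<exists>m \<le> n. S = {m + 1..n}"
  proof (cases "S = {}")
    case True then show ?thesis by (intro exI[of _ n]) auto
  next
    case False
    have fS: "finite S" unfolding S_def by simp
    define m0 where "m0 = Min S"
    have m0S: "m0 \<in> S" using Min_in[OF fS False] m0_def by simp
    have "S = {m0..n}"
    proof
      show "S \<subseteq> {m0..n}" using Min_le[OF fS] m0_def S_def by auto
    next
      show "{m0..n} \<subseteq> S"
      proof
        fix i assume i: "i \<in> {m0..n}"
        have "1 \<le> m0" "x (n+1) \<le> x m0 + 1" using m0S S_def by auto
        moreover have "x m0 \<le> x i" using lr i \<open>1 \<le> m0\<close> unfolding left_to_right_def by auto
        ultimately show "i \<in> S" using i S_def by auto
      qed
    qed
    moreover have "1 \<le> m0" "m0 \<le> n" using m0S S_def by auto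
    ultimately show ?thesis by (intro exI[of _ "m0 - 1"]) auto
  qed
  then obtain m where m: "m \<le> n" "S = {m + 1..n}" by blast
  have sm: "s = n - m" using sS m by simp
  hence ms: "n - s = m" using m by simp
  have nms: "n = m + s" using sm m by simp
  have inS: "\<And>i. 1 \<le> i \<Longrightarrow> i \<le> n \<Longrightarrow> x (n + 1) \<le> x i + 1 \<longleftrightarrow> m < i"
  proof -
    fix i assume "1 \<le> i" "i \<le> n"
    have "x (n + 1) \<le> x i + 1 \<longleftrightarrow> i \<in> S" unfolding S_def using \<open>1 \<le> i\<close> \<open>i \<le> n\<close> by simp
    also have "\<dots> \<longleftrightarrow> i \<in> {m + 1..n}" using m(2) by simp
    finally show "x (n + 1) \<le> x i + 1 \<longleftrightarrow> m < i" using \<open>i \<le> n\<close> by auto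
  qed
  have Hn1_low: "H (n + 1) x i = H n x i" if "i \<le> m" for i
  proof (cases "i = 0")
    case True then show ?thesis by (simp add: H_def)
  next
    case False
    have "\<not> x (n + 1) \<le> x i + 1" using inS[of i] False that m by simp
    hence "{j \<in> {i..n+1}. x j \<le> x i + 1} = {j \<in> {i..n}. x j \<le> x i + 1}"
      using le_Suc_eq by fastforce
    thus ?thesis unfolding H_def by simp
  qed
  have Hn1_high: "H (n + 1) x i = n + 1" if "m < i" "i \<le> n + 1" for i
  proof -
    have "n + 1 \<in> {j \<in> {i..n+1}. x j \<le> x i + 1}"
    proof (cases "i = n + 1")
      case True then show ?thesis by simp
    next
      case False
      then show ?thesis using inS[of i] that by simp
    qed
    hence "n + 1 \<le> H (n + 1) x i" using H_basic(2)[of i "n+1" "n+1" x] that by simp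
    moreover have "H (n + 1) x i \<le> n + 1" using H_basic(1)[of i "n+1" x] that by simp
    ultimately show ?thesis by simp
  qed
  have Hn_high: "H n x i = n" if "m < i" "i \<le> n" for i
  proof -
    have "x n \<le> x (n + 1)" using xle[of n] that by simp
    hence "n \<in> {j \<in> {i..n}. x j \<le> x i + 1}" using inS[of i] that by simp
    hence "n \<le> H n x i" using H_basic(2)[of i n n x] that by simp
    moreover have "H n x i \<le> n" using H_basic(1)[of i n x] that by simp
    ultimately show ?thesis by simp
  qed
  have Hm: "H n x m \<le> n"
    using H_basic(1)[of m n x] m by (cases "m = 0") (auto simp: H_def)
  have h0: "H n x 0 = 0" by (simp add: H_def)
  have mono: "\<And>i. i < m \<Longrightarrow> H n x i \<le> H n x (Suc i)" using H_mono[OF lr] m by simp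
  have lenB: "length (build (H n x) m) = m + H n x m" "rights (build (H n x) m) = m"
    "ups (build (H n x) m) = H n x m"
    using build_basic[of "H n x" m, OF h0 mono] by auto
  define B where "B = build (H n x) m"
  have A: "a_path n x = B @ replicate (n - H n x m) N @ replicate s E"
  proof (cases s)
    case 0
    hence "m = n" using nms by simp
    moreover have "H n x n = n"
    proof (cases "n = 0")
      case True then show ?thesis by (simp add: H_def)
    next
      case False
      then show ?thesis using H_basic(1)[of n n x] by simp
    qed
    ultimately show ?thesis using 0 a_path_eq[OF lr] B_def by simp
  next
    case (Suc k)
    have "build (H n x) (m + Suc k) = B @ replicate (n - H n x m) N @ replicate (Suc k) E"
      unfolding B_def by (rule build_const) (use Hn_high nms Suc in auto)
    thus ?thesis using a_path_eq[OF lr] nms Suc by simp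
  qed
  have A': "a_path (n + 1) x = B @ replicate (n + 1 - H n x m) N @ replicate (Suc s) E"
  proof -
    have "build (H (n + 1) x) (m + Suc s) = build (H (n + 1) x) m @ replicate (n + 1 - H (n + 1) x m) N @ replicate (Suc s) E"
      by (rule build_const) (use Hn1_high nms in auto)
    moreover have "build (H (n + 1) x) m = B" unfolding B_def by (rule build_cong) (use Hn1_low in auto)
    moreover have "H (n + 1) x m = H n x m" using Hn1_low by simp
    moreover have "m + Suc s = n + 1" using nms by simp
    ultimately show ?thesis using a_path_eq[OF lr1] by simp
  qed
  have tk: "take (m + n) (a_path n x) = B @ replicate (n - H n x m) N"
    unfolding A using lenB B_def Hm by simp
  have pt: "passes_through (a_path n x) m n"
    unfolding passes_through_def
    by (rule exI[of _ "m + n"]) (use tk lenB B_def Hm A in auto)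
  have "add_final_peak n (a_path n x) m = a_path (n + 1) x"
    unfolding add_final_peak_def A' tk using Hm nms
    by (simp add: Suc_diff_le replicate_append_same[symmetric])
  thus ?thesis using pt ms by simp
qed

end
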